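(* Let $e_1,\dots,e_n>0$ with $\sum_ie_i=1$, let $d\in\mathbb{R}_+^n$ be reported demands and $a$ the MMF allocation, and suppose $a_i<d_i$ for some agent $i$. Then, keeping all other agents' reported demands fixed, agent $i$'s MMF allocation is the same value $a_i$ for every report $d_i'\ge a_i$.
   Context: MMF$(e,d)$: set $r=1$, $E=1$, $S=\{1,\dots,n\}$, $a=0$; process agents $j$ in ascending order of $d_j/e_j$; if $d_j<re_j/E$, set $a_j=d_j$, remove $j$ from $S$, $r\leftarrow r-d_j$, $E\leftarrow E-e_j$ and continue; otherwise set $a_k=re_k/E$ for all $k\in S$ and stop; output $a$. *)

theory Defs
  imports Complex_Main
begin

text \<open>Agents are indexed 0..n-1.  mmf_proc e d r E js processes the agents of the list js
  (already sorted by d_j/e_j) with remaining resource r and remaining entitlement E.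
  The output is the allocation vector a (value 0 for indices not in the list).\<close>

fun mmf_proc :: "(nat \<Rightarrow> real) \<Rightarrow> (nat \<Rightarrow> real) \<Rightarrow> real \<Rightarrow> real \<Rightarrow> nat list \<Rightarrow> nat \<Rightarrow> real" where
  "mmf_proc e d r E [] = (\<lambda>_. 0)"
| "mmf_proc e d r E (j # js) =
     (if d j < r * e j / E
      then (mmf_proc e d (r - d j) (E - e j) js)(j := d j)
      else (\<lambda>k. if k \<in> set (j # js) then r * e k / E else 0))"

definition MMF :: "nat \<Rightarrow> (nat \<Rightarrow> real) \<Rightarrow> (nat \<Rightarrow> real) \<Rightarrow> nat \<Rightarrow> real" where
  "MMF n e d = mmf_proc e d 1 1 (sort_key (\<lambda>j. d j / e j) [0..<n])"

end

theory Submission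
  imports Defs
begin

lemma proc:
  assumes "sorted (map (\<lambda>k. d k / e k) js)" "distinct js" "\<forall>k\<in>set js. e k > 0" "E = sum_list (map e js)"
  shows "((\<forall>k\<in>set js. mmf_proc e d r E js k = d k) \<and> (js = [] \<or> sum_list (map d js) < r))
   \<or> (\<exists>l. l \<ge> r / E \<and> (\<forall>k\<in>set js. mmf_proc e d r E js k = min (d k) (l * e k))
        \<and> sum_list (map (\<lambda>k. min (d k) (l * e k)) js) = r)"
  using assms
proof (induction js arbitrary: r E)
  case Nil then show ?case by simp
next
  case (Cons j js)
  have ej: "e j > 0" using Cons.prems by simp
  have rest_nn: "sum_list (map e js) \<ge> 0"
    using Cons.prems(3) by (intro sum_list_nonneg) (auto intro: less_imp_le)
  have Epos: "E > 0" using Cons.prems(4) ej rest_nn by simp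
  have sortrest: "\<forall>k\<in>set js. d j / e j \<le> d k / e k" using Cons.prems(1) by simp
  have nj: "j \<notin> set js" using Cons.prems(2) by simp
  show ?case
  proof (cases "d j < r * e j / E")
    case True
    have dj: "d j * E < r * e j" using True Epos by (simp add: field_simps)
    have E': "E - e j = sum_list (map e js)" using Cons.prems(4) by simp
    have step: "mmf_proc e d r E (j#js) = (mmf_proc e d (r - d j) (E - e j) js)(j := d j)"
      using True by simp
    show ?thesis
    proof (cases "js = []")
      case True
      then have "E = e j" using Cons.prems(4) by simp
      then have "d j < r" using dj ej by simp
      then show ?thesis using step True by simp
    next
      case False
      then obtain k0 where k0: "k0 \<in> set js" by (cases js) auto
      have "e k0 \<le> sum_list (map e js)"
        using k0 Cons.prems(3) by (intro member_le_sum_list) (auto intro: less_imp_le)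
      then have E'pos: "E - e j > 0" using E' k0 Cons.prems(3) by force
      have lvl: "r / E < (r - d j) / (E - e j)"
        using dj Epos E'pos by (simp add: field_simps)
      have IH: "((\<forall>k\<in>set js. mmf_proc e d (r - d j) (E - e j) js k = d k) \<and> (js = [] \<or> sum_list (map d js) < r - d j))
   \<or> (\<exists>l. l \<ge> (r - d j) / (E - e j) \<and> (\<forall>k\<in>set js. mmf_proc e d (r - d j) (E - e j) js k = min (d k) (l * e k))
        \<and> sum_list (map (\<lambda>k. min (d k) (l * e k)) js) = r - d j)"
        using Cons.prems E' by (intro Cons.IH) auto
      then show ?thesis
      proof (elim disjE conjE exE)
        assume a: "\<forall>k\<in>set js. mmf_proc e d (r - d j) (E - e j) js k = d k"
          and b: "js = []"
        then show ?thesis using False by simp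
      next
        assume a: "\<forall>k\<in>set js. mmf_proc e d (r - d j) (E - e j) js k = d k"
          and b: "sum_list (map d js) < r - d j"
        show ?thesis
          apply (rule disjI1)
          using a b step nj by auto
      next
        fix l assume l1: "l \<ge> (r - d j) / (E - e j)"
          and l2: "\<forall>k\<in>set js. mmf_proc e d (r - d j) (E - e j) js k = min (d k) (l * e k)"
          and l3: "sum_list (map (\<lambda>k. min (d k) (l * e k)) js) = r - d j"
        have lr: "l \<ge> r / E" using l1 lvl by linarith
        have "d j < r / E * e j" using True by simp
        also have "\<dots> \<le> l * e j" using mult_right_mono[OF lr less_imp_le[OF ej]] by simp
        finally have "min (d j) (l * e j) = d j" by simp
        then show ?thesis
          apply (intro disjI2 exI[of _ l])
          using lr l2 l3 step nj by auto
      qed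
    qed
  next
    case False
    let ?l = "r / E"
    have stop: "mmf_proc e d r E (j#js) = (\<lambda>k. if k \<in> set (j # js) then r * e k / E else 0)"
      using False by simp
    have ge: "d k \<ge> ?l * e k" if "k \<in> set (j#js)" for k
    proof -
      have ek: "e k > 0" using that Cons.prems(3) by auto
      have "?l \<le> d j / e j" using False ej by (simp add: field_simps)
      also have "\<dots> \<le> d k / e k" using that sortrest by auto
      finally show ?thesis using ek by (simp add: field_simps)
    qed
    have mins: "\<forall>k\<in>set (j#js). min (d k) (?l * e k) = ?l * e k" using ge by (metis min.absorb2 times_divide_eq_left)
    have "sum_list (map (\<lambda>k. min (d k) (?l * e k)) (j#js)) = sum_list (map (\<lambda>k. ?l * e k) (j#js))"
      using mins by (intro arg_cong[where f=sum_list] map_cong) auto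
    also have "\<dots> = ?l * E" by (simp only: sum_list_const_mult Cons.prems(4)[symmetric])
    also have "\<dots> = r" using Epos by simp
    finally show ?thesis
      apply (intro disjI2 exI[of _ ?l])
      using stop mins by auto
  qed
qed


lemma setup_run:
  fixes n :: nat and e D :: "nat \<Rightarrow> real"
  assumes e_pos: "\<And>j. j < n \<Longrightarrow> e j > 0"
    and e_sum: "(\<Sum>j<n. e j) = 1"
    and i_lt: "i < n"
    and short: "MMF n e D i < D i"
  shows "\<exists>l. (\<forall>k<n. MMF n e D k = min (D k) (l * e k)) \<and> (\<Sum>k<n. min (D k) (l * e k)) = 1"
proof -
  define js where "js = sort_key (\<lambda>j. D j / e j) [0..<n]"
  have s: "sorted (map (\<lambda>j. D j / e j) js)" unfolding js_def by (rule sorted_sort_key)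
  have di: "distinct js" unfolding js_def by simp
  have st: "set js = {..<n}" unfolding js_def by auto
  have sl: "\<And>g. sum_list (map g js) = (\<Sum>k<n. g k)"
    using di st by (simp add: sum_list_distinct_conv_sum_set)
  have E: "1 = sum_list (map e js)" using sl[of e] e_sum by simp
  have M: "MMF n e D = mmf_proc e D 1 1 js" unfolding MMF_def js_def by simp
  have "((\<forall>k\<in>set js. mmf_proc e D 1 1 js k = D k) \<and> (js = [] \<or> sum_list (map D js) < 1))
   \<or> (\<exists>l. l \<ge> 1 / 1 \<and> (\<forall>k\<in>set js. mmf_proc e D 1 1 js k = min (D k) (l * e k))
        \<and> sum_list (map (\<lambda>k. min (D k) (l * e k)) js) = 1)"
    by (rule proc[OF s di _ E]) (use e_pos st in auto)
  then show ?thesis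
  proof (elim disjE conjE exE)
    assume "\<forall>k\<in>set js. mmf_proc e D 1 1 js k = D k"
    then have False using short M st i_lt by auto
    then show ?thesis ..
  next
    assume "\<forall>k\<in>set js. mmf_proc e D 1 1 js k = D k"
    then have False using short M st i_lt by auto
    then show ?thesis ..
  next
    fix l assume "\<forall>k\<in>set js. mmf_proc e D 1 1 js k = min (D k) (l * e k)"
      "sum_list (map (\<lambda>k. min (D k) (l * e k)) js) = 1"
    then show ?thesis using M st sl[of "\<lambda>k. min (D k) (l * e k)"] by (intro exI[of _ l]) auto
  qed
qed

lemma run_any:
  fixes n :: nat and e D :: "nat \<Rightarrow> real"
  assumes e_pos: "\<And>j. j < n \<Longrightarrow> e j > 0"
    and e_sum: "(\<Sum>j<n. e j) = 1"
    and i_lt: "i < n"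
  shows "((\<forall>k<n. MMF n e D k = D k) \<and> (\<Sum>k<n. D k) < 1) \<or>
    (\<exists>l. (\<forall>k<n. MMF n e D k = min (D k) (l * e k)) \<and> (\<Sum>k<n. min (D k) (l * e k)) = 1)"
proof -
  define js where "js = sort_key (\<lambda>j. D j / e j) [0..<n]"
  have s: "sorted (map (\<lambda>j. D j / e j) js)" unfolding js_def by (rule sorted_sort_key)
  have di: "distinct js" unfolding js_def by simp
  have st: "set js = {..<n}" unfolding js_def by auto
  have ne: "js \<noteq> []" using st i_lt by (metis empty_iff empty_set lessThan_iff)
  have sl: "\<And>g. sum_list (map g js) = (\<Sum>k<n. g k)"
    using di st by (simp add: sum_list_distinct_conv_sum_set)
  have E: "1 = sum_list (map e js)" using sl[of e] e_sum by simp
  have M: "MMF n e D = mmf_proc e D 1 1 js" unfolding MMF_def js_def by simp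
  have "((\<forall>k\<in>set js. mmf_proc e D 1 1 js k = D k) \<and> (js = [] \<or> sum_list (map D js) < 1))
   \<or> (\<exists>l. l \<ge> 1 / 1 \<and> (\<forall>k\<in>set js. mmf_proc e D 1 1 js k = min (D k) (l * e k))
        \<and> sum_list (map (\<lambda>k. min (D k) (l * e k)) js) = 1)"
    by (rule proc[OF s di _ E]) (use e_pos st in auto)
  then show ?thesis
  proof (elim disjE conjE exE)
    assume "\<forall>k\<in>set js. mmf_proc e D 1 1 js k = D k" "js = []"
    then show ?thesis using ne by blast
  next
    assume "\<forall>k\<in>set js. mmf_proc e D 1 1 js k = D k" "sum_list (map D js) < 1"
    then show ?thesis using M st sl[of D] by auto
  next
    fix l assume "\<forall>k\<in>set js. mmf_proc e D 1 1 js k = min (D k) (l * e k)"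
      "sum_list (map (\<lambda>k. min (D k) (l * e k)) js) = 1"
    then show ?thesis using M st sl[of "\<lambda>k. min (D k) (l * e k)"] by (intro disjI2 exI[of _ l]) auto
  qed
qed

theorem mainTheorem15:
  fixes n :: nat and e d :: "nat \<Rightarrow> real" and i :: nat and d' :: real
  assumes e_pos: "\<And>j. j < n \<Longrightarrow> e j > 0"
    and e_sum: "(\<Sum>j<n. e j) = 1"
    and d_nonneg: "\<And>j. j < n \<Longrightarrow> d j \<ge> 0"
    and i_lt: "i < n"
    and short: "MMF n e d i < d i"
    and d'_ge: "d' \<ge> MMF n e d i"
  shows "MMF n e (d(i := d')) i = MMF n e d i"
proof -
  define D where "D = d(i := d')"
  obtain l where l1: "\<forall>k<n. MMF n e d k = min (d k) (l * e k)"
    and l2: "(\<Sum>k<n. min (d k) (l * e k)) = 1"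
    using setup_run[OF e_pos e_sum i_lt short] by blast
  have ai: "MMF n e d i = l * e i" using l1 short i_lt by (auto simp: min_def split: if_splits)
  have samemin: "min (D k) (l * e k) = min (d k) (l * e k)" for k
    using ai d'_ge short l1 i_lt unfolding D_def by (auto simp: min_def)
  have sumD: "(\<Sum>k<n. min (D k) (l * e k)) = 1" using l2 samemin by simp
  have Di: "min (D i) (l * e i) = l * e i" using ai d'_ge unfolding D_def by simp
  have ei: "e i > 0" using e_pos i_lt by simp
  have R: "((\<forall>k<n. MMF n e D k = D k) \<and> (\<Sum>k<n. D k) < 1) \<or>
    (\<exists>l. (\<forall>k<n. MMF n e D k = min (D k) (l * e k)) \<and> (\<Sum>k<n. min (D k) (l * e k)) = 1)"
    by (rule run_any[where n=n and e=e and i=i and D=D]) (use e_pos e_sum i_lt in auto)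
  from R show ?thesis
  proof (elim disjE conjE exE)
    assume "(\<Sum>k<n. D k) < 1"
    moreover have "(\<Sum>k<n. min (D k) (l * e k)) \<le> (\<Sum>k<n. D k)"
      by (intro sum_mono) simp
    ultimately have False using sumD by simp
    then show ?thesis ..
  next
    fix l' assume m1: "\<forall>k<n. MMF n e D k = min (D k) (l' * e k)"
      and m2: "(\<Sum>k<n. min (D k) (l' * e k)) = 1"
    show ?thesis
    proof (cases "l' < l")
      case True
      have "(\<Sum>k<n. min (D k) (l' * e k)) < (\<Sum>k<n. min (D k) (l * e k))"
      proof (rule sum_strict_mono_ex1)
        show "\<forall>x\<in>{..<n}. min (D x) (l' * e x) \<le> min (D x) (l * e x)"
        proof
          fix x assume "x \<in> {..<n}"
          then have "e x > 0" using e_pos by simp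
          then have "l' * e x \<le> l * e x" using True by simp
          then show "min (D x) (l' * e x) \<le> min (D x) (l * e x)" by (rule min.mono[OF order_refl])
        qed
        have "l' * e i < l * e i" using True ei by simp
        then show "\<exists>a\<in>{..<n}. min (D a) (l' * e a) < min (D a) (l * e a)"
          using Di i_lt by (intro bexI[of _ i]) auto
      qed simp
      then have False using m2 sumD by simp
      then show ?thesis ..
    next
      case False
      have le: "\<forall>x\<in>{..<n}. min (D x) (l * e x) \<le> min (D x) (l' * e x)"
      proof
        fix x assume "x \<in> {..<n}"
        then have "e x > 0" using e_pos by simp
        then have "l * e x \<le> l' * e x" using False by simp
        then show "min (D x) (l * e x) \<le> min (D x) (l' * e x)" by (rule min.mono[OF order_refl])
      qed
      have "min (D i) (l' * e i) = min (D i) (l * e i)"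
      proof (rule ccontr)
        assume "min (D i) (l' * e i) \<noteq> min (D i) (l * e i)"
        then have "min (D i) (l * e i) < min (D i) (l' * e i)" using le i_lt by force
        then have "(\<Sum>k<n. min (D k) (l * e k)) < (\<Sum>k<n. min (D k) (l' * e k))"
          using le i_lt by (intro sum_strict_mono_ex1) auto
        then show False using m2 sumD by simp
      qed
      then show ?thesis using m1 i_lt Di ai unfolding D_def by simp
    qed
  qed
qed

end
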